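(* Let $X$ be a complex Banach space such that $A_u(B_X)=A(B_X)$. If $Y$ is a Banach space isomorphic to $X$ (i.e. there is a bounded linear bijection $T:Y\to X$ with bounded inverse), then $A_u(B_Y)=A(B_Y)$.
   Context: For a complex Banach space $Z$ with open unit ball $B_Z$: $A_u(B_Z)$ is the uniform algebra (supremum norm on $B_Z$) of bounded holomorphic functions on $B_Z$ that are uniformly continuous on $B_Z$; a finite type polynomial on $Z$ is a polynomial in finitely many elements of $Z^*$ (i.e. an element of the algebra generated by $Z^*$ and the constants); $A(B_Z)$ is the set of functions on $B_Z$ that are uniform limits on $B_Z$ of finite type polynomials. Always $A(B_Z)\subset A_u(B_Z)$. *)

theory Defs
  imports "HOL-Analysis.Analysis"
begin

class complex_vector_space = real_vector +
  fixes scaleC :: "complex \<Rightarrow> 'a \<Rightarrow> 'a"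
  assumes scaleC_add_right: "scaleC a (x + y) = scaleC a x + scaleC a y"
    and scaleC_add_left: "scaleC (a + b) x = scaleC a x + scaleC b x"
    and scaleC_scaleC: "scaleC a (scaleC b x) = scaleC (a * b) x"
    and scaleC_one: "scaleC 1 x = x"
    and scaleR_scaleC: "scaleR r x = scaleC (complex_of_real r) x"

class complex_normed_vector = complex_vector_space + real_normed_vector +
  assumes norm_scaleC: "norm (scaleC a x) = cmod a * norm x"

class complex_banach = complex_normed_vector + banach

definition clinear :: "('a::complex_vector_space \<Rightarrow> 'b::complex_vector_space) \<Rightarrow> bool" where
  "clinear T \<longleftrightarrow> (\<forall>x y. T (x + y) = T x + T y) \<and> (\<forall>c x. T (scaleC c x) = scaleC c (T x))"

definition cdual :: "('a::complex_normed_vector \<Rightarrow> complex) set" where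
  "cdual = {\<phi>. bounded_linear \<phi> \<and> (\<forall>c x. \<phi> (scaleC c x) = c * \<phi> x)}"

definition holomorphic_on_space :: "('a::complex_normed_vector \<Rightarrow> complex) \<Rightarrow> 'a set \<Rightarrow> bool" where
  "holomorphic_on_space f U \<longleftrightarrow>
     (\<forall>x\<in>U. \<exists>D. (f has_derivative D) (at x) \<and> (\<forall>c v. D (scaleC c v) = c * D v))"

text \<open>A_u(B_Z), membership depends only on the values on the open unit ball.\<close>
definition in_Au :: "('a::complex_normed_vector \<Rightarrow> complex) \<Rightarrow> bool" where
  "in_Au f \<longleftrightarrow> bounded (f ` ball 0 1) \<and> holomorphic_on_space f (ball 0 1)
                 \<and> uniformly_continuous_on (ball 0 1) f"

inductive_set ftpoly :: "('a::complex_normed_vector \<Rightarrow> complex) set" where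
  const: "(\<lambda>x. c) \<in> ftpoly"
| dual: "\<phi> \<in> cdual \<Longrightarrow> \<phi> \<in> ftpoly"
| add: "p \<in> ftpoly \<Longrightarrow> q \<in> ftpoly \<Longrightarrow> (\<lambda>x. p x + q x) \<in> ftpoly"
| mult: "p \<in> ftpoly \<Longrightarrow> q \<in> ftpoly \<Longrightarrow> (\<lambda>x. p x * q x) \<in> ftpoly"

definition in_A :: "('a::complex_normed_vector \<Rightarrow> complex) \<Rightarrow> bool" where
  "in_A f \<longleftrightarrow> (\<forall>e>0. \<exists>p\<in>ftpoly. \<forall>x\<in>ball 0 1. cmod (f x - p x) < e)"

end

theory Submission
  imports Defs "HOL-Computational_Algebra.Polynomial"
begin


definition om :: "nat \<Rightarrow> complex" where
  "om N = exp (2 * of_real pi * \<i> / of_nat N)"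

lemma om_pow: "om N ^ k = exp (2 * of_real pi * \<i> * of_nat k / of_nat N)"
  unfolding om_def by (simp add: exp_of_nat_mult[symmetric] algebra_simps)

lemma om_pow_eq_1: "N \<ge> 1 \<Longrightarrow> om N ^ k = 1 \<longleftrightarrow> N dvd k"
  unfolding om_pow by (rule complex_root_unity_eq_1)

lemma norm_om_pow [simp]: "cmod (om N ^ k) = 1"
  unfolding om_pow by (simp add: norm_exp_eq_Re)

definition DF :: "nat \<Rightarrow> nat \<Rightarrow> (complex \<Rightarrow> complex) \<Rightarrow> complex" where
  "DF n N f = (\<Sum>j<N. om N ^ (j * (N - n)) * f (om N ^ j)) / of_nat N"

lemma DF_monom:
  assumes "n < N"
  shows "DF n N (\<lambda>u. u ^ m) = (if m mod N = n then 1 else 0)"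
proof -
  define x where "x = om N ^ (N - n + m)"
  have N1: "N \<ge> 1" using assms by simp
  have eq: "om N ^ (j * (N - n)) * (om N ^ j) ^ m = x ^ j" for j
  proof -
    have "om N ^ (j * (N - n)) * (om N ^ j) ^ m = om N ^ (j * (N - n) + j * m)"
      by (simp add: power_add power_mult)
    also have "j * (N - n) + j * m = (N - n + m) * j" by (simp add: add_mult_distrib2 mult.commute)
    also have "om N ^ ((N - n + m) * j) = x ^ j" by (simp add: x_def power_mult)
    finally show ?thesis .
  qed
  have omN: "om N ^ N = 1" using om_pow_eq_1[OF N1, of N] by simp
  have xN: "x ^ N = 1"
  proof -
    have "x ^ N = (om N ^ N) ^ (N - n + m)" unfolding x_def by (simp add: power_mult[symmetric] mult.commute)
    then show ?thesis using omN by simp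
  qed
  have dv: "N dvd (N - n + m) \<longleftrightarrow> m mod N = n"
  proof (cases "n \<le> m")
    case True
    then have "N - n + m = N + (m - n)" using assms by simp
    then have "N dvd (N - n + m) \<longleftrightarrow> N dvd (m - n)" by simp
    also have "\<dots> \<longleftrightarrow> m mod N = n mod N" using True by (simp add: mod_eq_dvd_iff_nat)
    also have "n mod N = n" using assms by simp
    finally show ?thesis .
  next
    case False
    then have "0 < N - n + m" "N - n + m < N" using assms by auto
    then have "\<not> N dvd (N - n + m)" by (auto dest: dvd_imp_le)
    moreover have "m mod N \<noteq> n" using False assms by simp
    ultimately show ?thesis by simp
  qed
  have iff: "x = 1 \<longleftrightarrow> m mod N = n" unfolding x_def using om_pow_eq_1[OF N1] dv by simp
  have "DF n N (\<lambda>u. u ^ m) = (\<Sum>j<N. x ^ j) / of_nat N"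
    unfolding DF_def by (simp only: eq)
  also have "\<dots> = (if m mod N = n then 1 else 0)"
  proof (cases "m mod N = n")
    case True
    then have "x = 1" using iff by simp
    then show ?thesis using True N1 by simp
  next
    case False
    then have "x \<noteq> 1" using iff by simp
    then have "(\<Sum>j<N. x ^ j) = 0" using xN by (simp add: sum_gp_strict)
    then show ?thesis using False by simp
  qed
  finally show ?thesis .
qed

lemma DF_sum: "DF n N (\<lambda>u. \<Sum>m\<in>S. F m u) = (\<Sum>m\<in>S. DF n N (F m))"
proof -
  have "(\<Sum>j<N. om N ^ (j * (N - n)) * (\<Sum>m\<in>S. F m (om N ^ j)))
      = (\<Sum>j<N. \<Sum>m\<in>S. om N ^ (j * (N - n)) * F m (om N ^ j))"
    by (simp only: sum_distrib_left)
  also have "\<dots> = (\<Sum>m\<in>S. \<Sum>j<N. om N ^ (j * (N - n)) * F m (om N ^ j))"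
    by (rule sum.swap)
  finally show ?thesis unfolding DF_def by (simp only: sum_divide_distrib)
qed

lemma DF_cmult: "DF n N (\<lambda>u. c * f u) = c * DF n N f"
proof -
  have "(\<Sum>j<N. om N ^ (j * (N - n)) * (c * f (om N ^ j))) = c * (\<Sum>j<N. om N ^ (j * (N - n)) * f (om N ^ j))"
    by (simp only: sum_distrib_left mult.left_commute)
  then show ?thesis unfolding DF_def by (simp only: times_divide_eq_right)
qed

lemma DF_diff: "DF n N (\<lambda>u. f u - g u) = DF n N f - DF n N g"
proof -
  have "(\<Sum>j<N. om N ^ (j * (N - n)) * (f (om N ^ j) - g (om N ^ j)))
     = (\<Sum>j<N. om N ^ (j * (N - n)) * f (om N ^ j)) - (\<Sum>j<N. om N ^ (j * (N - n)) * g (om N ^ j))"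
    by (simp only: right_diff_distrib sum_subtractf)
  then show ?thesis unfolding DF_def by (simp only: diff_divide_distrib)
qed

lemma DF_bound:
  assumes "N > 0" "\<And>u. cmod u = 1 \<Longrightarrow> cmod (f u) \<le> B"
  shows "cmod (DF n N f) \<le> B"
proof -
  have "cmod (\<Sum>j<N. om N ^ (j * (N - n)) * f (om N ^ j)) \<le> (\<Sum>j<N. B)"
  proof (rule sum_norm_le)
    fix j assume "j \<in> {..<N}"
    have "cmod (om N ^ (j * (N - n)) * f (om N ^ j)) = cmod (f (om N ^ j))"
      by (simp only: norm_mult norm_om_pow mult_1)
    also have "\<dots> \<le> B" by (rule assms(2)) (rule norm_om_pow)
    finally show "cmod (om N ^ (j * (N - n)) * f (om N ^ j)) \<le> B" .
  qed
  also have "\<dots> = of_nat N * B" by simp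
  finally have S: "cmod (\<Sum>j<N. om N ^ (j * (N - n)) * f (om N ^ j)) \<le> of_nat N * B" .
  have "cmod (DF n N f) = cmod (\<Sum>j<N. om N ^ (j * (N - n)) * f (om N ^ j)) / of_nat N"
    unfolding DF_def by (simp add: norm_divide)
  also have "\<dots> \<le> (of_nat N * B) / of_nat N" using S assms(1) by (intro divide_right_mono) auto
  also have "\<dots> = B" using assms(1) by simp
  finally show ?thesis .
qed

lemma poly_sum_lt:
  fixes q :: "complex poly"
  assumes "degree q < K"
  shows "poly q u = (\<Sum>m<K. coeff q m * u ^ m)"
proof -
  have "(\<Sum>m<K. coeff q m * u ^ m) = (\<Sum>m\<le>degree q. coeff q m * u ^ m)"
    by (rule sum.mono_neutral_right) (use assms in \<open>auto simp: coeff_eq_0\<close>)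
  then show ?thesis by (simp add: poly_altdef)
qed

lemma DF_poly_scaled:
  fixes q :: "complex poly"
  assumes "n < N" "degree q < K"
  shows "DF n N (\<lambda>u. poly q (t * u)) = (\<Sum>m<K. if m mod N = n then coeff q m * t ^ m else 0)"
proof -
  have "(\<lambda>u. poly q (t * u)) = (\<lambda>u. \<Sum>m<K. (coeff q m * t ^ m) * u ^ m)"
    using assms by (simp add: poly_sum_lt power_mult_distrib mult.assoc)
  then have "DF n N (\<lambda>u. poly q (t * u)) = (\<Sum>m<K. DF n N (\<lambda>u. (coeff q m * t ^ m) * u ^ m))"
    by (simp add: DF_sum)
  also have "\<dots> = (\<Sum>m<K. if m mod N = n then coeff q m * t ^ m else 0)"
    apply (simp add: DF_cmult DF_monom[OF assms(1)])
    apply (rule sum.cong)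
     apply auto
    done
  finally show ?thesis .
qed

lemma DF_poly_exact:
  fixes q :: "complex poly"
  assumes "n < N" "degree q < N"
  shows "DF n N (poly q) = coeff q n"
proof -
  have "DF n N (\<lambda>u. poly q (1 * u)) = (\<Sum>m<N. if m mod N = n then coeff q m * 1 ^ m else 0)"
    by (rule DF_poly_scaled[OF assms])
  also have "\<dots> = (\<Sum>m<N. if m = n then coeff q m else 0)"
    by (rule sum.cong) auto
  also have "\<dots> = coeff q n" using assms by simp
  finally show ?thesis by simp
qed

lemma coeff_bound:
  fixes q :: "complex poly"
  assumes "\<And>u. cmod u \<le> 1 \<Longrightarrow> cmod (f u) \<le> M"
    and "\<And>u. cmod u \<le> 1 \<Longrightarrow> cmod (f u - poly q u) \<le> e"
  shows "cmod (coeff q m) \<le> M + e"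
proof -
  define N where "N = max m (degree q) + 1"
  have "coeff q m = DF m N (poly q)"
    by (rule DF_poly_exact[symmetric]) (auto simp: N_def)
  also have "cmod \<dots> \<le> M + e"
  proof (rule DF_bound)
    show "N > 0" by (simp add: N_def)
    fix u :: complex assume u: "cmod u = 1"
    have "cmod (poly q u) \<le> cmod (f u) + cmod (f u - poly q u)"
      using norm_triangle_ineq4[of "f u" "f u - poly q u"] by simp
    moreover have "cmod (f u) \<le> M" "cmod (f u - poly q u) \<le> e" using assms u by auto
    ultimately show "cmod (poly q u) \<le> M + e" by linarith
  qed
  finally show ?thesis .
qed

lemma DF_close:
  fixes q :: "complex poly"
  assumes "n < N" "degree q < N"
    and "\<And>u. cmod u \<le> 1 \<Longrightarrow> cmod (f u - poly q u) \<le> e"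
  shows "cmod (DF n N f - coeff q n) \<le> e"
proof -
  have "DF n N f - coeff q n = DF n N (\<lambda>u. f u - poly q u)"
    using DF_poly_exact[OF assms(1,2)] by (simp add: DF_diff)
  also have "cmod \<dots> \<le> e"
    by (rule DF_bound) (use assms in auto)
  finally show ?thesis .
qed

definition papprox :: "(complex \<Rightarrow> complex) \<Rightarrow> bool" where
  "papprox f \<longleftrightarrow> (\<forall>e>0. \<exists>q. \<forall>u. cmod u \<le> 1 \<longrightarrow> cmod (f u - poly q u) \<le> e)"

definition coefz :: "(complex \<Rightarrow> complex) \<Rightarrow> nat \<Rightarrow> complex" where
  "coefz f n = lim (\<lambda>N. DF n N f)"

lemma coefz_lim:
  assumes "papprox f"
  shows "(\<lambda>N. DF n N f) \<longlonglongrightarrow> coefz f n"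
proof -
  have "Cauchy (\<lambda>N. DF n N f)"
  proof (rule metric_CauchyI)
    fix e :: real assume e: "e > 0"
    have e3: "e/3 > 0" using e by simp
    obtain q where q: "\<And>u. cmod u \<le> 1 \<Longrightarrow> cmod (f u - poly q u) \<le> e/3"
      using assms e3 unfolding papprox_def by blast
    define M where "M = max n (degree q) + 1"
    have "dist (DF n N1 f) (DF n N2 f) < e" if "N1 \<ge> M" "N2 \<ge> M" for N1 N2
    proof -
      have a: "cmod (DF n N1 f - coeff q n) \<le> e/3"
        by (rule DF_close) (use that q in \<open>auto simp: M_def\<close>)
      have b: "cmod (DF n N2 f - coeff q n) \<le> e/3"
        by (rule DF_close) (use that q in \<open>auto simp: M_def\<close>)
      have "dist (DF n N1 f) (DF n N2 f) \<le> cmod (DF n N1 f - coeff q n) + cmod (DF n N2 f - coeff q n)"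
        using norm_triangle_ineq4[of "DF n N1 f - coeff q n" "DF n N2 f - coeff q n"] by (simp add: dist_norm)
      then show ?thesis using a b e by linarith
    qed
    then show "\<exists>M. \<forall>m\<ge>M. \<forall>k\<ge>M. dist (DF n m f) (DF n k f) < e" by blast
  qed
  then show ?thesis unfolding coefz_def by (simp add: Cauchy_convergent_iff convergent_LIMSEQ_iff)
qed

lemma coefz_close:
  fixes q :: "complex poly"
  assumes "papprox f" "\<And>u. cmod u \<le> 1 \<Longrightarrow> cmod (f u - poly q u) \<le> e"
  shows "cmod (coefz f n - coeff q n) \<le> e"
proof -
  have "(\<lambda>N. cmod (DF n N f - coeff q n)) \<longlonglongrightarrow> cmod (coefz f n - coeff q n)"
    by (intro tendsto_intros coefz_lim assms)
  moreover have "\<forall>N\<ge>max n (degree q) + 1. cmod (DF n N f - coeff q n) \<le> e"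
    using assms(2) by (auto intro!: DF_close)
  then have "\<exists>N0. \<forall>N\<ge>N0. cmod (DF n N f - coeff q n) \<le> e" by blast
  ultimately show ?thesis by (rule LIMSEQ_le_const2)
qed

lemma geo_tail: 
  fixes t :: real
  assumes "0 \<le> t" "t < 1"
  shows "(\<Sum>m<K. if N \<le> m then t ^ m else 0) \<le> t ^ N / (1 - t)"
proof -
  have t1: "1 - t \<noteq> 0" using assms by simp
  have "(\<Sum>m<K. if N \<le> m then t ^ m else 0) = (if N \<le> K then (t ^ N - t ^ K) / (1 - t) else 0)"
  proof (induction K)
    case 0 then show ?case by simp
  next
    case (Suc K)
    show ?case
    proof (cases "N \<le> K")
      case True
      have "(t ^ N - t ^ K) / (1 - t) + t ^ K = (t ^ N - t ^ Suc K) / (1 - t)"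
        using t1 by (simp add: field_simps)
      then show ?thesis using Suc.IH True by simp
    next
      case False
      then show ?thesis using Suc.IH by (cases "N = Suc K") auto
    qed
  qed
  also have "\<dots> \<le> t ^ N / (1 - t)"
  proof -
    have "(t ^ N - t ^ K) / (1 - t) \<le> t ^ N / (1 - t)"
      using assms by (intro divide_right_mono) auto
    moreover have "0 \<le> t ^ N / (1 - t)" using assms by simp
    ultimately show ?thesis by simp
  qed
  finally show ?thesis .
qed

lemma sum_if_lt:
  fixes N0 K :: nat
  assumes "N0 \<le> K"
  shows "(\<Sum>m<K. if m < N0 then F m else 0) = (\<Sum>m<N0. F m)"
proof -
  have "(\<Sum>m<K. if m < N0 then F m else 0) = sum F {m\<in>{..<K}. m < N0}"
    by (rule sum.inter_filter[symmetric]) simp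
  also have "{m\<in>{..<K}. m < N0} = {..<N0}" using assms by auto
  finally show ?thesis .
qed

lemma le_by_eps:
  fixes x y C :: real
  assumes "C \<ge> 0" "\<And>e. e > 0 \<Longrightarrow> x \<le> y + C * e"
  shows "x \<le> y"
proof (rule field_le_epsilon)
  fix e :: real assume "e > 0"
  then have "e / (C + 1) > 0" using assms by simp
  from assms(2)[OF this] have "x \<le> y + C * (e / (C+1))" .
  also have "C * (e / (C+1)) \<le> e" using assms \<open>e>0\<close> by (simp add: field_simps)
  finally show "x \<le> y + e" by simp
qed



lemma tri3:
  fixes a b c d :: "'a::real_normed_vector"
  shows "norm (a - d) \<le> norm (a - b) + norm (b - c) + norm (c - d)"
proof -
  have "a - d = (a - b) + (b - c) + (c - d)" by simp
  then have "norm (a - d) = norm ((a - b) + (b - c) + (c - d))" by simp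
  also have "\<dots> \<le> norm ((a - b) + (b - c)) + norm (c - d)" by (rule norm_triangle_ineq)
  also have "norm ((a - b) + (b - c)) \<le> norm (a - b) + norm (b - c)" by (rule norm_triangle_ineq)
  finally show ?thesis by simp
qed

lemma tail_bound:
  fixes t :: real and c :: "nat \<Rightarrow> complex"
  assumes t: "0 \<le> t" "t < 1" and cb: "\<And>m. cmod (c m) \<le> B"
    and P: "\<And>m. P m \<Longrightarrow> N \<le> m"
  shows "cmod (\<Sum>m<K. if P m then c m * of_real t ^ m else 0) \<le> B * (t ^ N / (1 - t))"
proof -
  have B0: "0 \<le> B" using cb[of 0] by (meson norm_ge_zero order_trans)
  have "cmod (\<Sum>m<K. if P m then c m * of_real t ^ m else 0) \<le> (\<Sum>m<K. B * (if N \<le> m then t ^ m else 0))"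
  proof (rule sum_norm_le)
    fix m assume "m \<in> {..<K}"
    show "cmod (if P m then c m * of_real t ^ m else 0) \<le> B * (if N \<le> m then t ^ m else 0)"
    proof (cases "P m")
      case True
      then have "N \<le> m" by (rule P)
      moreover have "cmod (c m) * t ^ m \<le> B * t ^ m" using cb[of m] t by (simp add: mult_right_mono)
      ultimately show ?thesis using True t by (simp add: norm_mult norm_power)
    next
      case False then show ?thesis using B0 t by simp
    qed
  qed
  also have "\<dots> = B * (\<Sum>m<K. if N \<le> m then t ^ m else 0)" by (simp add: sum_distrib_left)
  also have "\<dots> \<le> B * (t ^ N / (1 - t))" by (rule mult_left_mono[OF geo_tail[OF t] B0])
  finally show ?thesis .
qed

lemma estE:
  assumes pa: "papprox f" and bd: "\<And>u. cmod u \<le> 1 \<Longrightarrow> cmod (f u) \<le> M"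
    and t: "0 \<le> t" "t < 1" and nN: "n < N"
  shows "cmod (DF n N (\<lambda>u. f (of_real t * u)) - of_real t ^ n * coefz f n) \<le> M * (t ^ N / (1 - t))"
proof (rule le_by_eps[where C = "2 + t ^ N / (1 - t)"])
  show "0 \<le> 2 + t ^ N / (1 - t)" using t by simp
  fix e :: real assume e: "e > 0"
  obtain q where q: "\<And>u. cmod u \<le> 1 \<Longrightarrow> cmod (f u - poly q u) \<le> e"
    using pa e unfolding papprox_def by blast
  define K where "K = degree q + 1 + N"
  have Kq: "degree q < K" and nK: "n < K" using nN by (auto simp: K_def)
  let ?c = "coeff q"
  let ?t = "complex_of_real t"
  have cb: "cmod (?c m) \<le> M + e" for m by (rule coeff_bound[OF bd q])
  have A: "cmod (DF n N (\<lambda>u. f (?t*u)) - DF n N (\<lambda>u. poly q (?t*u))) \<le> e"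
  proof -
    have "DF n N (\<lambda>u. f (?t*u)) - DF n N (\<lambda>u. poly q (?t*u)) = DF n N (\<lambda>u. f (?t*u) - poly q (?t*u))"
      by (simp add: DF_diff)
    also have "cmod \<dots> \<le> e"
    proof (rule DF_bound)
      show "N > 0" using nN by simp
      fix u :: complex assume "cmod u = 1"
      then have "cmod (?t*u) \<le> 1" using t by (simp add: norm_mult)
      then show "cmod (f (?t*u) - poly q (?t*u)) \<le> e" by (rule q)
    qed
    finally show ?thesis .
  qed
  have B: "DF n N (\<lambda>u. poly q (?t*u)) - ?t ^ n * ?c n
     = (\<Sum>m<K. if m mod N = n \<and> m \<noteq> n then ?c m * ?t ^ m else 0)"
  proof -
    have s1: "(\<Sum>m<K. if m = n then ?c m * ?t ^ m else 0) = ?c n * ?t ^ n" using nK by simp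
    have "DF n N (\<lambda>u. poly q (?t*u)) = (\<Sum>m<K. if m mod N = n then ?c m * ?t ^ m else 0)"
      by (rule DF_poly_scaled[OF nN Kq])
    also have "\<dots> = (\<Sum>m<K. (if m = n then ?c m * ?t ^ m else 0)
                   + (if m mod N = n \<and> m \<noteq> n then ?c m * ?t ^ m else 0))"
      by (rule sum.cong) (use nN in auto)
    also have "\<dots> = (\<Sum>m<K. if m = n then ?c m * ?t ^ m else 0)
                   + (\<Sum>m<K. if m mod N = n \<and> m \<noteq> n then ?c m * ?t ^ m else 0)"
      by (rule sum.distrib)
    finally show ?thesis using s1 by (simp add: mult.commute)
  qed
  have B2: "cmod (\<Sum>m<K. if m mod N = n \<and> m \<noteq> n then ?c m * ?t ^ m else 0) \<le> (M + e) * (t ^ N / (1 - t))"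
    by (rule tail_bound[OF t cb]) (use nN in \<open>metis mod_less not_le\<close>)
  have C: "cmod (?t ^ n * ?c n - ?t ^ n * coefz f n) \<le> e"
  proof -
    have "cmod (coefz f n - ?c n) \<le> e" by (rule coefz_close[OF pa q])
    then have c1: "cmod (?c n - coefz f n) \<le> e" by (simp add: norm_minus_commute)
    have "t ^ n \<le> 1" using t by (simp add: power_le_one)
    have "cmod (?t ^ n * ?c n - ?t ^ n * coefz f n) = t ^ n * cmod (?c n - coefz f n)"
      using t by (simp add: right_diff_distrib[symmetric] norm_mult norm_power)
    also have "\<dots> \<le> 1 * e" using c1 \<open>t ^ n \<le> 1\<close> t by (intro mult_mono) auto
    finally show ?thesis by simp
  qed
  have "cmod (DF n N (\<lambda>u. f (?t*u)) - ?t ^ n * coefz f n)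
      \<le> cmod (DF n N (\<lambda>u. f (?t*u)) - DF n N (\<lambda>u. poly q (?t*u)))
        + cmod (DF n N (\<lambda>u. poly q (?t*u)) - ?t ^ n * ?c n)
        + cmod (?t ^ n * ?c n - ?t ^ n * coefz f n)" by (rule tri3)
  also have "\<dots> \<le> e + (M + e) * (t ^ N / (1 - t)) + e" using A B B2 C by simp
  also have "\<dots> = M * (t ^ N / (1 - t)) + (2 + t ^ N / (1 - t)) * e"
  proof -
    have "\<And>x::real. e + (M + e) * x + e = M * x + (2 + x) * e" by (simp add: algebra_simps)
    then show ?thesis .
  qed
  finally show "cmod (DF n N (\<lambda>u. f (?t*u)) - ?t ^ n * coefz f n) \<le> M * (t ^ N / (1 - t)) + (2 + t ^ N / (1 - t)) * e" .
qed

lemma estT: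
  assumes pa: "papprox f" and bd: "\<And>u. cmod u \<le> 1 \<Longrightarrow> cmod (f u) \<le> M"
    and t: "0 \<le> t" "t < 1"
  shows "cmod (f (of_real t) - (\<Sum>n<N0. coefz f n * of_real t ^ n)) \<le> M * (t ^ N0 / (1 - t))"
proof (rule le_by_eps[where C = "1 + of_nat N0 + t ^ N0 / (1 - t)"])
  show "0 \<le> 1 + of_nat N0 + t ^ N0 / (1 - t)" using t by simp
  fix e :: real assume e: "e > 0"
  obtain q where q: "\<And>u. cmod u \<le> 1 \<Longrightarrow> cmod (f u - poly q u) \<le> e"
    using pa e unfolding papprox_def by blast
  define K where "K = degree q + 1 + N0"
  have Kq: "degree q < K" and nK: "N0 \<le> K" by (auto simp: K_def)
  let ?c = "coeff q"
  let ?t = "complex_of_real t"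
  have cb: "cmod (?c m) \<le> M + e" for m by (rule coeff_bound[OF bd q])
  have P: "poly q ?t = (\<Sum>n<N0. ?c n * ?t ^ n) + (\<Sum>m<K. if N0 \<le> m then ?c m * ?t ^ m else 0)"
  proof -
    have "poly q ?t = (\<Sum>m<K. ?c m * ?t ^ m)" by (rule poly_sum_lt[OF Kq])
    also have "\<dots> = (\<Sum>m<K. (if m < N0 then ?c m * ?t ^ m else 0) + (if N0 \<le> m then ?c m * ?t ^ m else 0))"
      by (rule sum.cong) auto
    also have "\<dots> = (\<Sum>m<K. if m < N0 then ?c m * ?t ^ m else 0) + (\<Sum>m<K. if N0 \<le> m then ?c m * ?t ^ m else 0)"
      by (rule sum.distrib)
    also have "(\<Sum>m<K. if m < N0 then ?c m * ?t ^ m else 0) = (\<Sum>n<N0. ?c n * ?t ^ n)"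
      by (rule sum_if_lt[OF nK])
    finally show ?thesis .
  qed
  have A: "cmod (f ?t - poly q ?t) \<le> e" by (rule q) (use t in simp)
  have B: "cmod (\<Sum>m<K. if N0 \<le> m then ?c m * ?t ^ m else 0) \<le> (M + e) * (t ^ N0 / (1 - t))"
    by (rule tail_bound[OF t cb]) auto
  have C: "cmod ((\<Sum>n<N0. ?c n * ?t ^ n) - (\<Sum>n<N0. coefz f n * ?t ^ n)) \<le> of_nat N0 * e"
  proof -
    have "cmod ((\<Sum>n<N0. ?c n * ?t ^ n) - (\<Sum>n<N0. coefz f n * ?t ^ n))
        = cmod (\<Sum>n<N0. (?c n - coefz f n) * ?t ^ n)"
      by (simp add: sum_subtractf left_diff_distrib)
    also have "\<dots> \<le> (\<Sum>n<N0. e)"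
    proof (rule sum_norm_le)
      fix n assume "n \<in> {..<N0}"
      have "cmod (coefz f n - ?c n) \<le> e" by (rule coefz_close[OF pa q])
      then have c1: "cmod (?c n - coefz f n) \<le> e" by (simp add: norm_minus_commute)
      have "t ^ n \<le> 1" using t by (simp add: power_le_one)
      have "cmod ((?c n - coefz f n) * ?t ^ n) = cmod (?c n - coefz f n) * t ^ n"
        using t by (simp add: norm_mult norm_power)
      also have "\<dots> \<le> e * 1" using c1 \<open>t ^ n \<le> 1\<close> t e by (intro mult_mono) auto
      finally show "cmod ((?c n - coefz f n) * ?t ^ n) \<le> e" by simp
    qed
    finally show ?thesis by simp
  qed
  have eq: "f ?t - (\<Sum>n<N0. coefz f n * ?t ^ n) = (f ?t - poly q ?t)
      + (\<Sum>m<K. if N0 \<le> m then ?c m * ?t ^ m else 0)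
      + ((\<Sum>n<N0. ?c n * ?t ^ n) - (\<Sum>n<N0. coefz f n * ?t ^ n))"
    using P by (simp add: algebra_simps)
  have "cmod (f ?t - (\<Sum>n<N0. coefz f n * ?t ^ n)) \<le> cmod (f ?t - poly q ?t)
      + cmod (\<Sum>m<K. if N0 \<le> m then ?c m * ?t ^ m else 0)
      + cmod ((\<Sum>n<N0. ?c n * ?t ^ n) - (\<Sum>n<N0. coefz f n * ?t ^ n))"
    unfolding eq by (meson norm_triangle_ineq order_trans add_mono order_refl)
  also have "\<dots> \<le> e + (M + e) * (t ^ N0 / (1 - t)) + of_nat N0 * e" using A B C by simp
  also have "\<dots> = M * (t ^ N0 / (1 - t)) + (1 + of_nat N0 + t ^ N0 / (1 - t)) * e"
  proof -
    have "\<And>x::real. e + (M + e) * x + of_nat N0 * e = M * x + (1 + of_nat N0 + x) * e" by (simp add: algebra_simps)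
    then show ?thesis .
  qed
  finally show "cmod (f ?t - (\<Sum>n<N0. coefz f n * ?t ^ n)) \<le> M * (t ^ N0 / (1 - t)) + (1 + of_nat N0 + t ^ N0 / (1 - t)) * e" .
qed



lemma scaleC_zero_left [simp]: "scaleC 0 x = (0::'a::complex_vector_space)"
proof -
  have "scaleC 0 x = scaleC 0 x + scaleC 0 (x::'a)" using scaleC_add_left[of 0 0 x] by simp
  then show ?thesis by simp
qed

lemma scaleC_zero_right [simp]: "scaleC a 0 = (0::'a::complex_vector_space)"
proof -
  have "scaleC a 0 = scaleC a 0 + scaleC a (0::'a)" using scaleC_add_right[of a 0 0] by simp
  then show ?thesis by simp
qed

lemma scaleC_commute: "scaleC a (scaleC b x) = scaleC b (scaleC a (x::'a::complex_vector_space))"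
  by (simp add: scaleC_scaleC mult.commute)

lemma scaleR_scaleC_commute: "scaleR r (scaleC c x) = scaleC c (scaleR r (x::'a::complex_vector_space))"
  by (simp add: scaleR_scaleC scaleC_scaleC mult.commute)

lemma scaleC_minus_right: "scaleC a (- x) = - scaleC a (x::'a::complex_vector_space)"
proof -
  have "scaleC a (- x) + scaleC a x = 0" using scaleC_add_right[of a "-x" x] by simp
  then show ?thesis by (simp add: eq_neg_iff_add_eq_0)
qed

lemma scaleC_diff_right: "scaleC a (x - y) = scaleC a x - scaleC a (y::'a::complex_vector_space)"
  using scaleC_add_right[of a x "-y"] by (simp add: scaleC_minus_right)

lemma bounded_linear_scaleC: "bounded_linear (scaleC c :: 'a::complex_normed_vector \<Rightarrow> 'a)"
  by (rule bounded_linear_intro[where K = "cmod c"])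
     (auto simp: scaleC_add_right scaleR_scaleC_commute norm_scaleC mult.commute)

definition CL :: "('a::complex_normed_vector \<Rightarrow> 'b::complex_normed_vector) \<Rightarrow> bool" where
  "CL L \<longleftrightarrow> bounded_linear L \<and> (\<forall>c x. L (scaleC c x) = scaleC c (L x))"

lemma CL_comp: "CL L1 \<Longrightarrow> CL L2 \<Longrightarrow> CL (\<lambda>x. L1 (L2 x))"
  unfolding CL_def using bounded_linear_compose[of L1 L2] by (auto simp: o_def)

lemma CL_scaleC: "CL L \<Longrightarrow> CL (\<lambda>x. scaleC c (L x))"
  unfolding CL_def using bounded_linear_compose[OF bounded_linear_scaleC[of c], of L]
  by (auto simp: o_def scaleC_commute)

lemma CL_scaleR: "CL L \<Longrightarrow> CL (\<lambda>x. scaleR r (L x))"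
  unfolding CL_def using bounded_linear_compose[OF bounded_linear_scaleR_right[of r], of L]
  by (auto simp: o_def scaleR_scaleC_commute)

lemma CL_dual_line:
  fixes \<psi> :: "'a::complex_normed_vector \<Rightarrow> complex" and z :: "'b::complex_normed_vector"
  assumes "\<psi> \<in> cdual"
  shows "CL (\<lambda>x. scaleC (a * \<psi> x) z)"
proof -
  have bl: "bounded_linear \<psi>" and h: "\<And>c x. \<psi> (scaleC c x) = c * \<psi> x"
    using assms by (auto simp: cdual_def)
  obtain K where K: "\<And>x. cmod (\<psi> x) \<le> norm x * K" using bounded_linear.bounded[OF bl] by blast
  have "bounded_linear (\<lambda>x. scaleC (a * \<psi> x) z)"
  proof (rule bounded_linear_intro[where K = "cmod a * K * norm z"])
    fix x y show "scaleC (a * \<psi> (x + y)) z = scaleC (a * \<psi> x) z + scaleC (a * \<psi> y) z"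
      by (simp add: linear_add[OF bounded_linear.linear[OF bl]] distrib_left scaleC_add_left)
  next
    fix r x show "scaleC (a * \<psi> (scaleR r x)) z = scaleR r (scaleC (a * \<psi> x) z)"
      by (simp add: h scaleR_scaleC scaleC_scaleC mult.commute mult.left_commute)
  next
    fix x
    have "norm (scaleC (a * \<psi> x) z) = cmod a * cmod (\<psi> x) * norm z" by (simp add: norm_scaleC norm_mult)
    also have "\<dots> \<le> cmod a * (norm x * K) * norm z" using K[of x] by (intro mult_right_mono mult_left_mono) auto
    also have "\<dots> = norm x * (cmod a * K * norm z)" by (simp add: algebra_simps)
    finally show "norm (scaleC (a * \<psi> x) z) \<le> norm x * (cmod a * K * norm z)" .
  qed
  moreover have "scaleC (a * \<psi> (scaleC c x)) z = scaleC c (scaleC (a * \<psi> x) z)" for c x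
    by (simp add: h scaleC_scaleC mult.commute mult.left_commute)
  ultimately show ?thesis unfolding CL_def by blast
qed

lemma CL_zero_map: "CL L \<Longrightarrow> L 0 = 0"
  unfolding CL_def by (simp add: linear_0 bounded_linear.linear)

lemma ftpoly_cmult: "p \<in> ftpoly \<Longrightarrow> (\<lambda>x. c * p x) \<in> ftpoly"
  using ftpoly.mult[OF ftpoly.const] by blast

lemma ftpoly_sum: fixes N :: nat shows "(\<And>i. i < N \<Longrightarrow> F i \<in> ftpoly) \<Longrightarrow> (\<lambda>x. \<Sum>i<N. F i x) \<in> ftpoly"
proof (induction N)
  case 0 then show ?case using ftpoly.const[of 0] by simp
next
  case (Suc N)
  then have "(\<lambda>x. (\<Sum>i<N. F i x) + F N x) \<in> ftpoly"
    by (intro ftpoly.add) auto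
  then show ?case by simp
qed

lemma ftpoly_comp:
  fixes L :: "'b::complex_normed_vector \<Rightarrow> 'a::complex_normed_vector"
  assumes "p \<in> ftpoly" "CL L"
  shows "(\<lambda>y. p (x0 + L y)) \<in> ftpoly"
  using assms(1)
proof induction
  case (const c) then show ?case by (rule ftpoly.const)
next
  case (dual \<phi>)
  have bl: "bounded_linear \<phi>" and h: "\<And>c x. \<phi> (scaleC c x) = c * \<phi> x"
    using dual by (auto simp: cdual_def)
  have "(\<lambda>y. \<phi> (L y)) \<in> cdual"
    using assms(2) bounded_linear_compose[OF bl, of L] unfolding cdual_def CL_def
    by (auto simp: o_def h)
  then have "(\<lambda>y. \<phi> x0 + \<phi> (L y)) \<in> ftpoly"
    by (intro ftpoly.add ftpoly.const ftpoly.dual)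
  then show ?case by (simp add: linear_add[OF bounded_linear.linear[OF bl]])
next
  case (add p q) from add.IH show ?case by (rule ftpoly.add)
next
  case (mult p q) from mult.IH show ?case by (rule ftpoly.mult)
qed

lemma ftpoly_line:
  assumes "p \<in> ftpoly"
  shows "\<exists>q. \<forall>u. p (scaleC u w) = poly q u"
  using assms
proof induction
  case (const c) then show ?case by (intro exI[of _ "[:c:]"]) simp
next
  case (dual \<phi>)
  then have h: "\<And>c x. \<phi> (scaleC c x) = c * \<phi> x" by (auto simp: cdual_def)
  show ?case by (intro exI[of _ "[:0, \<phi> w:]"]) (simp add: h)
next
  case (add p q)
  then obtain q1 q2 where "\<forall>u. p (scaleC u w) = poly q1 u" "\<forall>u. q (scaleC u w) = poly q2 u" by blast
  then show ?case by (intro exI[of _ "q1 + q2"]) simp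
next
  case (mult p q)
  then obtain q1 q2 where "\<forall>u. p (scaleC u w) = poly q1 u" "\<forall>u. q (scaleC u w) = poly q2 u" by blast
  then show ?case by (intro exI[of _ "q1 * q2"]) simp
qed

lemma ftpoly_lip:
  assumes "p \<in> ftpoly"
  shows "\<exists>B K. (\<forall>x\<in>ball 0 1. cmod (p x) \<le> B) \<and>
     (\<forall>x\<in>ball 0 1. \<forall>y\<in>ball 0 1. cmod (p x - p y) \<le> K * norm (x - y))"
  using assms
proof induction
  case (const c) then show ?case by (intro exI[of _ "cmod c"] exI[of _ 0]) simp
next
  case (dual \<phi>)
  then have bl: "bounded_linear \<phi>" by (auto simp: cdual_def)
  obtain K where K: "K > 0" "\<And>x. cmod (\<phi> x) \<le> norm x * K"
    using bounded_linear.pos_bounded[OF bl] by blast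
  have "\<forall>x\<in>ball 0 1. cmod (\<phi> x) \<le> K"
  proof
    fix x :: 'a assume "x \<in> ball 0 1"
    then have "norm x * K \<le> 1 * K" using K by (intro mult_right_mono) auto
    then show "cmod (\<phi> x) \<le> K" using K(2)[of x] by simp
  qed
  moreover have "cmod (\<phi> x - \<phi> y) \<le> K * norm (x - y)" for x y
    using K(2)[of "x - y"] by (simp add: linear_diff[OF bounded_linear.linear[OF bl]] mult.commute)
  ultimately show ?case by blast
next
  case (add p q)
  then obtain B1 K1 B2 K2 where
    1: "\<forall>x\<in>ball 0 1. cmod (p x) \<le> B1" "\<forall>x\<in>ball 0 1. \<forall>y\<in>ball 0 1. cmod (p x - p y) \<le> K1 * norm (x - y)" and
    2: "\<forall>x\<in>ball 0 1. cmod (q x) \<le> B2" "\<forall>x\<in>ball 0 1. \<forall>y\<in>ball 0 1. cmod (q x - q y) \<le> K2 * norm (x - y)"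
    by blast
  have "\<forall>x\<in>ball 0 1. cmod (p x + q x) \<le> B1 + B2"
    using 1 2 by (meson add_mono norm_triangle_le)
  moreover have "\<forall>x\<in>ball 0 1. \<forall>y\<in>ball 0 1. cmod ((p x + q x) - (p y + q y)) \<le> (K1 + K2) * norm (x - y)"
  proof (intro ballI)
    fix x y :: 'a assume xy: "x \<in> ball 0 1" "y \<in> ball 0 1"
    have "cmod ((p x + q x) - (p y + q y)) \<le> cmod (p x - p y) + cmod (q x - q y)"
      by (metis add_diff_add norm_triangle_ineq)
    also have "\<dots> \<le> K1 * norm (x - y) + K2 * norm (x - y)" using 1 2 xy by (meson add_mono)
    finally show "cmod ((p x + q x) - (p y + q y)) \<le> (K1 + K2) * norm (x - y)" by (simp add: distrib_right)
  qed
  ultimately show ?case by blast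
next
  case (mult p q)
  then obtain B1 K1 B2 K2 where
    1: "\<forall>x\<in>ball 0 1. cmod (p x) \<le> B1" "\<forall>x\<in>ball 0 1. \<forall>y\<in>ball 0 1. cmod (p x - p y) \<le> K1 * norm (x - y)" and
    2: "\<forall>x\<in>ball 0 1. cmod (q x) \<le> B2" "\<forall>x\<in>ball 0 1. \<forall>y\<in>ball 0 1. cmod (q x - q y) \<le> K2 * norm (x - y)"
    by blast
  have B10: "0 \<le> B1" using 1(1) by (metis centre_in_ball norm_ge_zero order_trans zero_less_one)
  have B20: "0 \<le> B2" using 2(1) by (metis centre_in_ball norm_ge_zero order_trans zero_less_one)
  have "\<forall>x\<in>ball 0 1. cmod (p x * q x) \<le> B1 * B2"
  proof
    fix x :: 'a assume x: "x \<in> ball 0 1"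
    have "cmod (p x) \<le> B1" "cmod (q x) \<le> B2" using 1 2 x by auto
    then show "cmod (p x * q x) \<le> B1 * B2"
      using mult_mono[OF _ _ B10 norm_ge_zero] by (simp add: norm_mult)
  qed
  moreover have "\<forall>x\<in>ball 0 1. \<forall>y\<in>ball 0 1. cmod (p x * q x - p y * q y) \<le> (B1 * K2 + B2 * K1) * norm (x - y)"
  proof (intro ballI)
    fix x y :: 'a assume xy: "x \<in> ball 0 1" "y \<in> ball 0 1"
    have "p x * q x - p y * q y = p x * (q x - q y) + q y * (p x - p y)" by (simp add: algebra_simps)
    then have "cmod (p x * q x - p y * q y) \<le> cmod (p x) * cmod (q x - q y) + cmod (q y) * cmod (p x - p y)"
      by (metis norm_mult norm_triangle_ineq)
    also have "\<dots> \<le> B1 * (K2 * norm (x - y)) + B2 * (K1 * norm (x - y))"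
      using 1 2 xy B10 B20 by (intro add_mono mult_mono) auto
    finally show "cmod (p x * q x - p y * q y) \<le> (B1 * K2 + B2 * K1) * norm (x - y)" by (simp add: algebra_simps)
  qed
  ultimately show ?case by blast
qed

lemma ftpoly_deg:
  assumes "\<forall>\<phi>\<in>(cdual :: ('a::complex_normed_vector \<Rightarrow> complex) set). \<forall>x. \<phi> x = 0"
    and "(p :: 'a \<Rightarrow> complex) \<in> ftpoly"
  shows "\<exists>c. \<forall>x. p x = c"
  using assms(2)
proof induction
  case (dual \<phi>) then show ?case using assms(1) by blast
qed auto

lemma inA_limit:
  assumes "\<And>e. e > 0 \<Longrightarrow> \<exists>h. in_A h \<and> (\<forall>x\<in>ball 0 1. cmod (f x - h x) \<le> e)"
  shows "in_A f"
  unfolding in_A_def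
proof (intro allI impI)
  fix e :: real assume e: "e > 0"
  obtain h where h: "in_A h" "\<forall>x\<in>ball 0 1. cmod (f x - h x) \<le> e/2" using assms[of "e/2"] e by auto
  have e2: "e/2 > 0" using e by simp
  obtain p where p: "p \<in> ftpoly" "\<forall>x\<in>ball 0 1. cmod (h x - p x) < e/2"
    using h(1) e2 unfolding in_A_def by blast
  have "\<forall>x\<in>ball 0 1. cmod (f x - p x) < e"
  proof
    fix x :: 'a assume x: "x \<in> ball 0 1"
    have "cmod (f x - p x) \<le> cmod (f x - h x) + cmod (h x - p x)" by (rule norm_diff_triangle_ineq[THEN order_trans[rotated]]) simp
    then show "cmod (f x - p x) < e" using h(2) p(2) x by fastforce
  qed
  then show "\<exists>p\<in>ftpoly. \<forall>x\<in>ball 0 1. cmod (f x - p x) < e" using p(1) by blast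
qed

lemma ucont_subset:
  fixes f :: "'a::metric_space \<Rightarrow> 'b::metric_space"
  assumes "uniformly_continuous_on B f" "A \<subseteq> B"
  shows "uniformly_continuous_on A f"
  unfolding uniformly_continuous_on_def
proof (intro allI impI)
  fix e :: real assume "e > 0"
  then obtain d where "d > 0" "\<forall>x\<in>B. \<forall>x'\<in>B. dist x' x < d \<longrightarrow> dist (f x') (f x) < e"
    using assms(1) unfolding uniformly_continuous_on_def by blast
  then show "\<exists>d>0. \<forall>x\<in>A. \<forall>x'\<in>A. dist x' x < d \<longrightarrow> dist (f x') (f x) < e" using assms(2) by blast
qed

lemma Au_comp:
  fixes g :: "'b::complex_normed_vector \<Rightarrow> complex" and L :: "'a::complex_normed_vector \<Rightarrow> 'b"
  assumes g: "in_Au g" and L: "CL L" and maps: "\<And>x. x \<in> ball 0 1 \<Longrightarrow> y0 + L x \<in> ball 0 1"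
  shows "in_Au (\<lambda>x. g (y0 + L x))"
proof -
  have bl: "bounded_linear L" and h: "\<And>c x. L (scaleC c x) = scaleC c (L x)" using L by (auto simp: CL_def)
  have img: "(\<lambda>x. y0 + L x) ` ball 0 1 \<subseteq> ball 0 1" using maps by auto
  have "bounded ((\<lambda>x. g (y0 + L x)) ` ball 0 1)"
  proof -
    have "(\<lambda>x. g (y0 + L x)) ` ball 0 1 \<subseteq> g ` ball 0 1" using img by auto
    then show ?thesis using g unfolding in_Au_def by (meson bounded_subset)
  qed
  moreover have "holomorphic_on_space (\<lambda>x. g (y0 + L x)) (ball 0 1)"
    unfolding holomorphic_on_space_def
  proof
    fix x :: 'a assume x: "x \<in> ball 0 1"
    obtain D where D: "(g has_derivative D) (at (y0 + L x))" "\<And>c v. D (scaleC c v) = c * D v"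
      using g maps[OF x] unfolding in_Au_def holomorphic_on_space_def by blast
    have dL: "((\<lambda>x. y0 + L x) has_derivative L) (at x)"
      using has_derivative_add[OF has_derivative_const bounded_linear_imp_has_derivative[OF bl], of y0 "at x"] by simp
    have "((g \<circ> (\<lambda>x. y0 + L x)) has_derivative (D \<circ> L)) (at x)"
      by (rule diff_chain_at[OF dL D(1)])
    moreover have "(D \<circ> L) (scaleC c v) = c * (D \<circ> L) v" for c v by (simp add: h D(2))
    ultimately show "\<exists>D. ((\<lambda>x. g (y0 + L x)) has_derivative D) (at x) \<and> (\<forall>c v. D (scaleC c v) = c * D v)"
      by (intro exI[of _ "D \<circ> L"]) (auto simp: o_def)
  qed
  moreover have "uniformly_continuous_on (ball 0 1) (\<lambda>x. g (y0 + L x))"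
  proof -
    have u1: "uniformly_continuous_on (ball 0 1) (\<lambda>x. y0 + L x)"
      by (intro uniformly_continuous_on_add uniformly_continuous_on_const bounded_linear.uniformly_continuous_on[OF bl]
          uniformly_continuous_on_id)
    have u2: "uniformly_continuous_on ((\<lambda>x. y0 + L x) ` ball 0 1) g"
      using g img unfolding in_Au_def by (meson ucont_subset)
    show ?thesis using uniformly_continuous_on_compose[OF u1 u2] by (simp add: o_def)
  qed
  ultimately show ?thesis unfolding in_Au_def by blast
qed

lemma Au_add:
  assumes "in_Au f" "in_Au g"
  shows "in_Au (\<lambda>x. f x + g x)"
proof -
  have "bounded ((\<lambda>x. f x + g x) ` ball 0 1)"
  proof -
    obtain B1 where "\<forall>x\<in>ball 0 1. cmod (f x) \<le> B1" using assms(1) unfolding in_Au_def bounded_iff by auto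
    moreover obtain B2 where "\<forall>x\<in>ball 0 1. cmod (g x) \<le> B2" using assms(2) unfolding in_Au_def bounded_iff by auto
    ultimately have "\<forall>x\<in>ball 0 1. cmod (f x + g x) \<le> B1 + B2" by (meson add_mono norm_triangle_le)
    then show ?thesis unfolding bounded_iff by blast
  qed
  moreover have "holomorphic_on_space (\<lambda>x. f x + g x) (ball 0 1)"
    unfolding holomorphic_on_space_def
  proof
    fix x :: 'a assume x: "x \<in> ball 0 1"
    obtain D1 where D1: "(f has_derivative D1) (at x)" "\<And>c v. D1 (scaleC c v) = c * D1 v"
      using assms(1) x unfolding in_Au_def holomorphic_on_space_def by blast
    obtain D2 where D2: "(g has_derivative D2) (at x)" "\<And>c v. D2 (scaleC c v) = c * D2 v"
      using assms(2) x unfolding in_Au_def holomorphic_on_space_def by blast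
    show "\<exists>D. ((\<lambda>x. f x + g x) has_derivative D) (at x) \<and> (\<forall>c v. D (scaleC c v) = c * D v)"
      by (intro exI[of _ "\<lambda>v. D1 v + D2 v"] conjI has_derivative_add D1 D2)
         (simp add: D1(2) D2(2) distrib_left)
  qed
  moreover have "uniformly_continuous_on (ball 0 1) (\<lambda>x. f x + g x)"
    using assms unfolding in_Au_def by (intro uniformly_continuous_on_add) auto
  ultimately show ?thesis unfolding in_Au_def by blast
qed

lemma Au_cmult:
  assumes "in_Au f"
  shows "in_Au (\<lambda>x. c * f x)"
proof -
  have "bounded ((\<lambda>x. c * f x) ` ball 0 1)"
  proof -
    obtain B1 where "\<forall>x\<in>ball 0 1. cmod (f x) \<le> B1" using assms(1) unfolding in_Au_def bounded_iff by auto
    then have "\<forall>x\<in>ball 0 1. cmod (c * f x) \<le> cmod c * B1" by (simp add: norm_mult mult_left_mono)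
    then show ?thesis unfolding bounded_iff by blast
  qed
  moreover have "holomorphic_on_space (\<lambda>x. c * f x) (ball 0 1)"
    unfolding holomorphic_on_space_def
  proof
    fix x :: 'a assume x: "x \<in> ball 0 1"
    obtain D1 where D1: "(f has_derivative D1) (at x)" "\<And>c v. D1 (scaleC c v) = c * D1 v"
      using assms(1) x unfolding in_Au_def holomorphic_on_space_def by blast
    show "\<exists>D. ((\<lambda>x. c * f x) has_derivative D) (at x) \<and> (\<forall>c v. D (scaleC c v) = c * D v)"
      by (intro exI[of _ "\<lambda>v. c * D1 v"] conjI has_derivative_mult_right D1)
         (simp add: D1(2) mult.left_commute)
  qed
  moreover have "uniformly_continuous_on (ball 0 1) (\<lambda>x. c * f x)"
    using assms unfolding in_Au_def by (intro uniformly_continuous_on_cmul_left) auto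
  ultimately show ?thesis unfolding in_Au_def by blast
qed

lemma Au_zero: "in_Au (\<lambda>x::'a::complex_normed_vector. 0)"
proof -
  have "bounded ((\<lambda>x::'a. 0::complex) ` ball 0 1)" unfolding bounded_iff by auto
  then show ?thesis unfolding in_Au_def holomorphic_on_space_def
    by (auto intro!: exI[of _ "\<lambda>v. 0"] uniformly_continuous_on_const)
qed

lemma Au_sum: fixes N :: nat shows "(\<And>i. i < N \<Longrightarrow> in_Au (F i)) \<Longrightarrow> in_Au (\<lambda>x. \<Sum>i<N. F i x)"
proof (induction N)
  case 0 then show ?case using Au_zero by simp
next
  case (Suc N)
  then have "in_Au (\<lambda>x. (\<Sum>i<N. F i x) + F N x)" by (intro Au_add) auto
  then show ?case by simp
qed



lemma local_chart:
  fixes T :: "'y::complex_normed_vector \<Rightarrow> 'x::complex_normed_vector"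
  assumes CLT: "CL T" and CLi: "CL (inv T)" and inv1: "\<And>y. inv T (T y) = y"
    and c: "c > 0" "\<And>x. norm (inv T x) \<le> norm x * c"
    and a: "norm a < 1"
  obtains s \<beta> where "s > 0" "\<And>x. norm x < 1 \<Longrightarrow> norm (a + scaleR s (inv T x)) < 1"
     "\<And>y. a + scaleR s (inv T (\<beta> y)) = y" "\<beta> a = 0" "open (\<beta> -` ball 0 1)"
     "(\<beta> has_derivative (\<lambda>v. scaleR (1/s) (T v))) (at a)"
     "CL (\<lambda>v. scaleR (1/s) (T v))"
proof -
  define s where "s = (1 - norm a) / (c + 1)"
  have s: "s > 0" using a c by (simp add: s_def)
  define L where "L = (\<lambda>v. scaleR (1/s) (T v))"
  define \<beta> where "\<beta> = (\<lambda>y. L y - L a)"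
  have CLL: "CL L" unfolding L_def by (rule CL_scaleR[OF CLT])
  have blL: "bounded_linear L" using CLL by (simp add: CL_def)
  have bli: "bounded_linear (inv T)" using CLi by (simp add: CL_def)
  have maps: "norm (a + scaleR s (inv T x)) < 1" if "norm x < 1" for x
  proof -
    have "norm (a + scaleR s (inv T x)) \<le> norm a + s * norm (inv T x)"
      using s by (metis abs_of_pos norm_scaleR norm_triangle_ineq)
    also have "s * norm (inv T x) \<le> s * (norm x * c)" using c(2)[of x] s by (simp add: mult_left_mono)
    also have "s * (norm x * c) < s * (c + 1)"
    proof -
      have "norm x * c \<le> 1 * c" by (rule mult_right_mono) (use that c in auto)
      then have "norm x * c < c + 1" by simp
      then show ?thesis using s by (rule mult_strict_left_mono)
    qed
    also have "norm a + s * (c + 1) = 1" using c by (simp add: s_def)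
    finally show ?thesis by simp
  qed
  have inv\<beta>: "a + scaleR s (inv T (\<beta> y)) = y" for y
  proof -
    have "inv T (\<beta> y) = scaleR (1/s) y - scaleR (1/s) a"
      unfolding \<beta>_def L_def
      by (simp add: linear_diff[OF bounded_linear.linear[OF bli]] linear_scale[OF bounded_linear.linear[OF bli]] inv1)
    then show ?thesis using s by (simp add: scaleR_diff_right)
  qed
  have der: "(\<beta> has_derivative L) (at x)" for x
  proof -
    have d1: "(L has_derivative L) (at x)" by (rule bounded_linear_imp_has_derivative[OF blL])
    have "((\<lambda>y. L y - L a) has_derivative (\<lambda>v. L v - 0)) (at x)"
      by (rule has_derivative_diff[OF d1 has_derivative_const])
    then show ?thesis by (simp add: \<beta>_def)
  qed
  have op: "open (\<beta> -` ball 0 1)"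
    by (rule continuous_open_vimage[OF open_ball]) (rule has_derivative_continuous[OF der])
  have \<beta>a: "\<beta> a = 0" by (simp add: \<beta>_def)
  show ?thesis
    using that[OF s maps inv\<beta> \<beta>a op der[unfolded L_def] CLL[unfolded L_def]] .
qed



lemma pow_inv_cancel:
  fixes u :: real
  assumes "u \<noteq> 0"
  shows "complex_of_real (u ^ n) * complex_of_real (1/u) ^ n = 1"
proof -
  have "u ^ n * (1/u) ^ n = 1" using assms by (simp add: power_one_over)
  then have "complex_of_real (u ^ n * (1/u) ^ n) = 1" by simp
  then show ?thesis by simp
qed

lemma cancel_help:
  fixes X K e :: real
  assumes "X \<noteq> 0"
  shows "X * (e / (K * X)) = e / K"
proof (cases "K = 0")
  case True then show ?thesis by simp
next
  case False then show ?thesis using assms by (simp add: field_simps)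
qed

lemma Au_div:
  assumes "in_Au f"
  shows "in_Au (\<lambda>x. f x / c)"
proof -
  have eq: "(\<lambda>x. f x / c) = (\<lambda>x. inverse c * f x)" by (rule ext) (simp only: divide_inverse_commute)
  show ?thesis unfolding eq by (rule Au_cmult[OF assms])
qed

lemma Au_comp0:
  fixes g :: "'b::complex_normed_vector \<Rightarrow> complex" and L :: "'a::complex_normed_vector \<Rightarrow> 'b"
  assumes g: "in_Au g" and L: "CL L" and maps: "\<And>x. x \<in> ball 0 1 \<Longrightarrow> L x \<in> ball 0 1"
  shows "in_Au (\<lambda>x. g (L x))"
  using Au_comp[OF g L, of 0] maps by simp

lemma norm_om [simp]: "cmod (om N) = 1"
  using norm_om_pow[of N 1] by simp

theorem lemma2p9:
  fixes T :: "'y::complex_banach \<Rightarrow> 'x::complex_banach"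
  assumes hX: "\<forall>f :: 'x \<Rightarrow> complex. in_Au f \<longleftrightarrow> in_A f"
    and hT: "bounded_linear T" "clinear T" "bij T"
    and hTinv: "bounded_linear (inv T)"
  shows "\<forall>g :: 'y \<Rightarrow> complex. in_Au g \<longleftrightarrow> in_A g"
proof -
  have invT1: "\<And>y. inv T (T y) = y" using hT(3) by (simp add: bij_is_inj inv_f_f)
  have invT2: "\<And>x. T (inv T x) = x" using hT(3) by (simp add: bij_is_surj surj_f_inv_f)
  have CLT: "CL T" using hT unfolding CL_def clinear_def by auto
  have CLi: "CL (inv T)"
  proof -
    have "inv T (scaleC c x) = scaleC c (inv T x)" for c x
    proof -
      have "T (scaleC c (inv T x)) = scaleC c x" using hT(2) invT2 by (simp add: clinear_def)
      then show ?thesis using invT1[of "scaleC c (inv T x)"] by simp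
    qed
    then show ?thesis using hTinv by (simp add: CL_def)
  qed
  obtain c where c: "c > 0" "\<And>x. norm (inv T x) \<le> norm x * c"
    using bounded_linear.pos_bounded[OF hTinv] by blast
  obtain b0 where b0: "b0 > 0" "\<And>y. norm (T y) \<le> norm y * b0"
    using bounded_linear.pos_bounded[OF hT(1)] by blast
  define b where "b = max b0 (1/c)"
  have b: "b > 0" "\<And>y. norm (T y) \<le> norm y * b" "b * c \<ge> 1"
  proof -
    show "b > 0" using b0 by (simp add: b_def)
    show "norm (T y) \<le> norm y * b" for y
      using b0(2)[of y] by (rule order_trans) (simp add: b_def mult_left_mono)
    have "1/c \<le> b" by (simp add: b_def)
    then show "b * c \<ge> 1" using c by (simp add: field_simps)
  qed
  show ?thesis
  proof (intro allI iffI)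
    fix g :: "'y \<Rightarrow> complex"
    assume gA: "in_A g"
    have bdd: "bounded (g ` ball 0 1)"
    proof -
      obtain p where p: "p \<in> ftpoly" "\<forall>x\<in>ball 0 1. cmod (g x - p x) < 1"
        using gA zero_less_one unfolding in_A_def by blast
      obtain B where B: "\<forall>x\<in>ball 0 1. cmod (p x) \<le> B" using ftpoly_lip[OF p(1)] by blast
      have "\<forall>x\<in>ball 0 1. cmod (g x) \<le> B + 1"
      proof
        fix x :: 'y assume x: "x \<in> ball 0 1"
        have "cmod (g x) \<le> cmod (p x) + cmod (g x - p x)"
          using norm_triangle_ineq4[of "p x" "p x - g x"] by (simp add: norm_minus_commute)
        then show "cmod (g x) \<le> B + 1" using B p(2) x by fastforce
      qed
      then show ?thesis unfolding bounded_iff by blast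
    qed
    have uc: "uniformly_continuous_on (ball 0 1) g"
      unfolding uniformly_continuous_on_def
    proof (intro allI impI)
      fix e :: real assume e: "e > 0"
      have e3: "e/3 > 0" using e by simp
      obtain p where p: "p \<in> ftpoly" "\<forall>x\<in>ball 0 1. cmod (g x - p x) < e/3"
        using gA e3 unfolding in_A_def by blast
      obtain K where K: "\<forall>x\<in>ball 0 1. \<forall>y\<in>ball 0 1. cmod (p x - p y) \<le> K * norm (x - y)"
        using ftpoly_lip[OF p(1)] by blast
      define d where "d = e / (3 * (\<bar>K\<bar> + 1))"
      have d: "d > 0" using e by (simp add: d_def)
      have "dist (g x') (g x) < e" if xs: "x \<in> ball 0 1" "x' \<in> ball 0 1" "dist x' x < d" for x x'
      proof -
        have "cmod (p x' - p x) \<le> K * norm (x' - x)" using K xs by blast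
        also have "\<dots> \<le> (\<bar>K\<bar> + 1) * norm (x' - x)" by (intro mult_right_mono) auto
        also have "\<dots> \<le> (\<bar>K\<bar> + 1) * d" using xs(3) by (intro mult_left_mono) (auto simp: dist_norm)
        also have "\<dots> = e/3"
        proof -
          have k1: "0 < \<bar>K\<bar> + 1" using abs_ge_zero[of K] by linarith
          then show ?thesis by (simp add: d_def field_simps)
        qed
        finally have 2: "cmod (p x' - p x) \<le> e/3" .
        have "dist (g x') (g x) \<le> cmod (g x' - p x') + cmod (p x' - p x) + cmod (p x - g x)"
          unfolding dist_norm by (rule tri3)
        moreover have "cmod (p x - g x) < e/3" using p(2) xs(1) by (simp add: norm_minus_commute)
        moreover have "cmod (g x' - p x') < e/3" using p(2) xs(2) by blast
        ultimately show ?thesis using 2 by linarith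
      qed
      then show "\<exists>d>0. \<forall>x\<in>ball 0 1. \<forall>x'\<in>ball 0 1. dist x' x < d \<longrightarrow> dist (g x') (g x) < e"
        using d by blast
    qed
    have hol: "holomorphic_on_space g (ball 0 1)"
      unfolding holomorphic_on_space_def
    proof
      fix a :: 'y assume a: "a \<in> ball 0 1"
      then have na: "norm a < 1" by simp
      obtain s \<beta> where s: "s > 0" and maps: "\<And>x. norm x < 1 \<Longrightarrow> norm (a + scaleR s (inv T x)) < 1"
        and inv\<beta>: "\<And>y. a + scaleR s (inv T (\<beta> y)) = y" and \<beta>a: "\<beta> a = 0"
        and op: "open (\<beta> -` ball 0 1)"
        and der: "(\<beta> has_derivative (\<lambda>v. scaleR (1/s) (T v))) (at a)"
        and CLL: "CL (\<lambda>v. scaleR (1/s) (T v))"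
        by (rule local_chart[OF CLT CLi invT1 c na]) blast
      define f where "f = (\<lambda>x. g (a + scaleR s (inv T x)))"
      have CLs: "CL (\<lambda>x. scaleR s (inv T x))" by (rule CL_scaleR[OF CLi])
      have "in_A f"
        unfolding in_A_def
      proof (intro allI impI)
        fix e :: real assume "e > 0"
        then obtain p where p: "p \<in> ftpoly" "\<forall>y\<in>ball 0 1. cmod (g y - p y) < e"
          using gA unfolding in_A_def by blast
        have "(\<lambda>x. p (a + scaleR s (inv T x))) \<in> ftpoly" by (rule ftpoly_comp[OF p(1) CLs])
        moreover have "\<forall>x\<in>ball 0 1. cmod (f x - p (a + scaleR s (inv T x))) < e"
          using p(2) maps by (simp add: f_def)
        ultimately show "\<exists>p\<in>ftpoly. \<forall>x\<in>ball 0 1. cmod (f x - p x) < e"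
          by (intro bexI[where x="\<lambda>x. p (a + scaleR s (inv T x))"]) simp_all
      qed
      then have "in_Au f" using hX by blast
      moreover have "(0::'x) \<in> ball 0 1" by simp
      ultimately obtain D where D: "(f has_derivative D) (at 0)" "\<And>c v. D (scaleC c v) = c * D v"
        unfolding in_Au_def holomorphic_on_space_def by blast
      have d1: "((f \<circ> \<beta>) has_derivative (D \<circ> (\<lambda>v. scaleR (1/s) (T v)))) (at a)"
        by (rule diff_chain_at[OF der]) (simp add: \<beta>a D(1))
      have fg: "f \<circ> \<beta> = g" by (rule ext) (simp add: f_def inv\<beta>)
      have d2: "(g has_derivative (D \<circ> (\<lambda>v. scaleR (1/s) (T v)))) (at a)" using d1 fg by simp
      have "\<forall>c v. (D \<circ> (\<lambda>v. scaleR (1/s) (T v))) (scaleC c v) = c * (D \<circ> (\<lambda>v. scaleR (1/s) (T v))) v"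
        using CLL by (simp add: CL_def D(2))
      then show "\<exists>D. (g has_derivative D) (at a) \<and> (\<forall>c v. D (scaleC c v) = c * D v)" using d2 by blast
    qed
    show "in_Au g" unfolding in_Au_def using bdd uc hol by blast
  next
    fix g :: "'y \<Rightarrow> complex"
    assume gAu: "in_Au g"
    show "in_A g"
    proof (cases "\<exists>\<psi>\<in>(cdual :: ('x \<Rightarrow> complex) set). \<exists>x. \<psi> x \<noteq> 0")
      case False
      then have deg: "\<forall>\<psi>\<in>(cdual :: ('x \<Rightarrow> complex) set). \<forall>x. \<psi> x = 0" by blast
      have fconst: "f x = f 0" if fA: "in_A f" and x: "x \<in> ball 0 1" for f :: "'x \<Rightarrow> complex" and x
      proof (rule ccontr)
        assume ne: "f x \<noteq> f 0"
        define e where "e = cmod (f x - f 0) / 2"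
        have e: "e > 0" using ne by (simp add: e_def)
        obtain p where p: "p \<in> ftpoly" "\<forall>x\<in>ball 0 1. cmod (f x - p x) < e"
          using fA e unfolding in_A_def by blast
        obtain k where k: "\<forall>x. p x = k" using ftpoly_deg[OF deg p(1)] by blast
        have "cmod (f x - f 0) \<le> cmod (f x - p x) + cmod (f 0 - p 0)"
          using norm_triangle_ineq4[of "f x - p x" "f 0 - p 0"] k by simp
        also have "\<dots> < e + e"
        proof -
          have "cmod (f x - p x) < e" using p(2) x by blast
          moreover have "cmod (f 0 - p 0) < e" using p(2) by simp
          ultimately show ?thesis by linarith
        qed
        finally show False by (simp add: e_def)
      qed
      have "g constant_on ball 0 1"
      proof (rule locally_constant_imp_constant[OF connected_ball])
        fix a :: 'y assume a: "a \<in> ball 0 1"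
        then have na: "norm a < 1" by simp
        obtain s \<beta> where s: "s > 0" and maps: "\<And>x. norm x < 1 \<Longrightarrow> norm (a + scaleR s (inv T x)) < 1"
          and inv\<beta>: "\<And>y. a + scaleR s (inv T (\<beta> y)) = y" and \<beta>a: "\<beta> a = 0"
          and op: "open (\<beta> -` ball 0 1)"
          and der: "(\<beta> has_derivative (\<lambda>v. scaleR (1/s) (T v))) (at a)"
          and CLL: "CL (\<lambda>v. scaleR (1/s) (T v))"
          by (rule local_chart[OF CLT CLi invT1 c na]) blast
        define f where "f = (\<lambda>x. g (a + scaleR s (inv T x)))"
        have "in_Au f" unfolding f_def
          by (rule Au_comp[OF gAu CL_scaleR[OF CLi]]) (use maps in simp)
        then have fA: "in_A f" using hX by blast
        have "\<forall>y \<in> ball 0 1 \<inter> \<beta> -` ball 0 1. g y = g a"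
        proof
          fix y assume "y \<in> ball 0 1 \<inter> \<beta> -` ball 0 1"
          then have "\<beta> y \<in> ball 0 1" by simp
          then have "f (\<beta> y) = f 0" by (rule fconst[OF fA])
          moreover have "f 0 = g a" using CL_zero_map[OF CLi] by (simp add: f_def)
          ultimately show "g y = g a" by (simp add: f_def inv\<beta>)
        qed
        moreover have "openin (top_of_set (ball 0 1)) (ball 0 1 \<inter> \<beta> -` ball 0 1)"
          by (rule openin_open_Int[OF op])
        moreover have "a \<in> ball 0 1 \<inter> \<beta> -` ball 0 1" using a \<beta>a by simp
        ultimately show "\<exists>U. openin (top_of_set (ball 0 1)) U \<and> a \<in> U \<and> (\<forall>x\<in>U. g x = g a)" by blast
      qed
      then obtain k where k: "\<forall>y\<in>ball 0 1. g y = k" unfolding constant_on_def by blast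
      then have "g 0 = k" by simp
      then have gc: "\<forall>y\<in>ball 0 1. g y = g 0" using k by simp
      show "in_A g" unfolding in_A_def
      proof (intro allI impI)
        fix e :: real assume "e > 0"
        have "\<forall>y\<in>ball 0 1. cmod (g y - g 0) < e"
        proof
          fix y :: 'y assume "y \<in> ball 0 1"
          then have "g y = g 0" using gc by blast
          then show "cmod (g y - g 0) < e" using \<open>e > 0\<close> by simp
        qed
        then show "\<exists>p\<in>ftpoly. \<forall>x\<in>ball 0 1. cmod (g x - p x) < e"
          by (intro bexI[where x="\<lambda>x. g 0"] ftpoly.const) simp
      qed
    next
      case True
      then obtain \<psi> :: "'x \<Rightarrow> complex" and x0 where \<psi>: "\<psi> \<in> cdual" "\<psi> x0 \<noteq> 0" by blast
      have bl\<psi>: "bounded_linear \<psi>" and h\<psi>: "\<And>c x. \<psi> (scaleC c x) = c * \<psi> x"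
        using \<psi>(1) by (auto simp: cdual_def)
      obtain M where M: "\<forall>y\<in>ball 0 1. cmod (g y) \<le> M"
        using gAu unfolding in_Au_def bounded_iff by auto
      have "cmod (g 0) \<le> M" using M by simp
      then have M0: "0 \<le> M" using norm_ge_zero[of "g 0"] by linarith
      define K where "K = onorm \<psi>"
      have K: "K > 0" unfolding K_def using onorm_pos_lt[OF bl\<psi>] \<psi>(2) by blast
      have Kb: "cmod (\<psi> x) \<le> K * norm x" for x unfolding K_def by (rule onorm[OF bl\<psi>])
      have Bd: "cmod (g (scaleC u z)) \<le> M" if "norm z < 1" "cmod u \<le> 1" for z u
      proof -
        have "norm (scaleC u z) = cmod u * norm z" by (rule norm_scaleC)
        also have "\<dots> \<le> 1 * norm z" using that by (intro mult_right_mono) auto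
        finally have "norm (scaleC u z) < 1" using that by simp
        then show ?thesis using M by simp
      qed
      have PA: "papprox (\<lambda>u. g (scaleC u z))" if z: "norm z < 1" for z
      proof (cases "z = 0")
        case True
        then show ?thesis unfolding papprox_def by (intro allI impI exI[of _ "[:g 0:]"]) simp
      next
        case False
        define \<theta> where "\<theta> = norm z"
        have \<theta>: "0 < \<theta>" "\<theta> < 1" using False z by (auto simp: \<theta>_def)
        obtain x' where x': "\<theta> * K * norm x' < cmod (\<psi> x')"
        proof (rule ccontr)
          assume nt: "\<not> thesis"
          have "\<not> (\<theta> * K * norm x < cmod (\<psi> x))" for x using that[of x] nt by blast
          then have "\<forall>x. cmod (\<psi> x) \<le> (\<theta> * K) * norm x" by (simp add: not_less)
          then have "onorm \<psi> \<le> \<theta> * K" using \<theta> K by (intro onorm_bound) auto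
          then show False using \<theta> K by (simp add: K_def)
        qed
        have \<psi>x': "\<psi> x' \<noteq> 0"
        proof
          assume "\<psi> x' = 0"
          with x' have "\<theta> * K * norm x' < 0" by simp
          moreover have "0 \<le> \<theta> * K * norm x'" using \<theta> K by simp
          ultimately show False by simp
        qed
        define x1 where "x1 = scaleC (1 / \<psi> x') x'"
        have \<psi>x1: "\<psi> x1 = 1" using \<psi>x' by (simp add: x1_def h\<psi>)
        have nx1: "\<theta> * K * norm x1 < 1"
        proof -
          have "norm x1 = norm x' / cmod (\<psi> x')" by (simp add: x1_def norm_scaleC norm_divide)
          then have "\<theta> * K * norm x1 = (\<theta> * K * norm x') / cmod (\<psi> x')" by simp
          also have "\<dots> < 1" using x' \<psi>x' by (simp add: divide_less_eq)
          finally show ?thesis .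
        qed
        define \<alpha> where "\<alpha> = 1 / (K * \<theta>)"
        have \<alpha>: "\<alpha> > 0" using K \<theta> by (simp add: \<alpha>_def)
        define f where "f = (\<lambda>x. g (0 + scaleC (of_real \<alpha> * \<psi> x) z))"
        have "in_Au f" unfolding f_def
        proof (rule Au_comp[OF gAu CL_dual_line[OF \<psi>(1)]])
          fix x :: 'x assume "x \<in> ball 0 1"
          then have nx: "norm x < 1" by simp
          have "norm (scaleC (of_real \<alpha> * \<psi> x) z) = \<alpha> * cmod (\<psi> x) * \<theta>"
            using \<alpha> by (simp add: norm_scaleC norm_mult \<theta>_def)
          also have "\<dots> \<le> \<alpha> * (K * norm x) * \<theta>" using \<alpha> \<theta> Kb[of x] by (intro mult_right_mono mult_left_mono) auto
          also have "\<dots> = norm x" using K \<theta> by (simp add: \<alpha>_def)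
          finally show "0 + scaleC (of_real \<alpha> * \<psi> x) z \<in> ball 0 1" using nx by simp
        qed
        then have fA: "in_A f" using hX by blast
        define w where "w = scaleC (of_real (K * \<theta>)) x1"
        have fw: "f (scaleC u w) = g (scaleC u z)" for u
        proof -
          have "of_real \<alpha> * \<psi> (scaleC u w) = u"
            using K \<theta> by (simp add: w_def h\<psi> \<psi>x1 \<alpha>_def)
          then show ?thesis by (simp add: f_def)
        qed
        have nw: "norm (scaleC u w) < 1" if "cmod u \<le> 1" for u
        proof -
          have "norm (scaleC u w) = cmod u * (K * \<theta> * norm x1)"
            using K \<theta> by (simp add: w_def norm_scaleC norm_mult abs_mult abs_of_pos)
          also have "\<dots> \<le> 1 * (K * \<theta> * norm x1)" using that K \<theta> by (intro mult_right_mono) auto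
          finally show ?thesis using nx1 by (simp add: mult.commute mult.left_commute)
        qed
        show ?thesis unfolding papprox_def
        proof (intro allI impI)
          fix e :: real assume "e > 0"
          then obtain p where p: "p \<in> ftpoly" "\<forall>x\<in>ball 0 1. cmod (f x - p x) < e"
            using fA unfolding in_A_def by blast
          obtain q where q: "\<forall>u. p (scaleC u w) = poly q u" using ftpoly_line[OF p(1)] by blast
          have "cmod (g (scaleC u z) - poly q u) \<le> e" if "cmod u \<le> 1" for u
          proof -
            have "scaleC u w \<in> ball 0 1" using nw[OF that] by simp
            then have "cmod (f (scaleC u w) - p (scaleC u w)) < e" using p(2) by blast
            then show ?thesis using q fw[of u] by simp
          qed
          then show "\<exists>q. \<forall>u. cmod u \<le> 1 \<longrightarrow> cmod (g (scaleC u z) - poly q u) \<le> e" by blast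
        qed
      qed
      define a where "a n z = coefz (\<lambda>u. g (scaleC u z)) n" for n z
      have E: "cmod (DF n N (\<lambda>u. g (scaleC (of_real t * u) z)) - of_real t ^ n * a n z) \<le> M * (t ^ N / (1 - t))"
        if "norm z < 1" "0 \<le> t" "t < 1" "n < N" for z t n N
        using estE[OF PA[OF that(1)] Bd[OF that(1)] that(2,3,4)] unfolding a_def by simp
      have Lim: "(\<lambda>N. DF n N (\<lambda>u. g (scaleC (of_real t * u) z))) \<longlonglongrightarrow> of_real t ^ n * a n z"
        if z: "norm z < 1" and t: "0 \<le> t" "t < 1" for z t n
      proof -
        have tN: "(\<lambda>N. t ^ N) \<longlonglongrightarrow> 0" by (rule LIMSEQ_power_zero) (use t in simp)
        have l0: "(\<lambda>N. M * (t ^ N / (1 - t))) \<longlonglongrightarrow> M * (0 / (1 - t))"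
          by (intro tendsto_mult tendsto_const tendsto_divide tN) (use t in auto)
        have "(\<lambda>N. DF n N (\<lambda>u. g (scaleC (of_real t * u) z)) - of_real t ^ n * a n z) \<longlonglongrightarrow> 0"
        proof (rule Lim_null_comparison)
          show "\<forall>\<^sub>F N in sequentially. cmod (DF n N (\<lambda>u. g (scaleC (of_real t * u) z)) - of_real t ^ n * a n z) \<le> M * (t ^ N / (1 - t))"
            using E[OF z t] by (intro eventually_sequentiallyI[of "Suc n"]) auto
          show "(\<lambda>N. M * (t ^ N / (1 - t))) \<longlonglongrightarrow> 0" using l0 by simp
        qed
        then have "(\<lambda>N. (DF n N (\<lambda>u. g (scaleC (of_real t * u) z)) - of_real t ^ n * a n z) + of_real t ^ n * a n z)
                   \<longlonglongrightarrow> 0 + of_real t ^ n * a n z"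
          by (intro tendsto_add tendsto_const)
        then show ?thesis by simp
      qed
      have HOM: "a n (scaleR s z) = of_real s ^ n * a n z" if z: "norm z < 1" and s: "0 < s" "s \<le> 1" for z s n
      proof -
        have nz: "norm (scaleR s z) < 1"
        proof -
          have "norm (scaleR s z) = s * norm z" using s by simp
          also have "\<dots> \<le> 1 * norm z" using s by (intro mult_right_mono) auto
          finally show ?thesis using z by simp
        qed
        have l1: "(\<lambda>N. DF n N (\<lambda>u. g (scaleC (of_real (1/2) * u) (scaleR s z)))) \<longlonglongrightarrow> of_real (1/2) ^ n * a n (scaleR s z)"
          by (rule Lim[OF nz]) auto
        have l2: "(\<lambda>N. DF n N (\<lambda>u. g (scaleC (of_real (s/2) * u) z))) \<longlonglongrightarrow> of_real (s/2) ^ n * a n z"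
          by (rule Lim[OF z]) (use s in auto)
        have eq: "scaleC (of_real (1/2) * u) (scaleR s z) = scaleC (of_real (s/2) * u) z" for u
          by (simp add: scaleR_scaleC scaleC_scaleC mult.commute mult.left_commute)
        have "of_real (1/2) ^ n * a n (scaleR s z) = of_real (s/2) ^ n * a n z"
          using LIMSEQ_unique[OF l1 l2[folded eq]] .
        then show ?thesis by (simp add: power_divide field_simps)
      qed
      have TAY: "cmod (g (scaleC (of_real t) z) - (\<Sum>n<N0. a n z * of_real t ^ n)) \<le> M * (t ^ N0 / (1 - t))"
        if "norm z < 1" "0 \<le> t" "t < 1" for z t N0
        using estT[OF PA[OF that(1)] Bd[OF that(1)] that(2,3)] unfolding a_def by simp
      define zx where "zx x = scaleR (1/c) (inv T x)" for x
      have nzx: "norm (zx x) < 1" if "norm x < 1" for x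
      proof -
        have "norm (zx x) = norm (inv T x) / c" using c by (simp add: zx_def)
        also have "\<dots> \<le> (norm x * c) / c" using c by (intro divide_right_mono c(2)) auto
        also have "\<dots> = norm x" using c by simp
        finally show ?thesis using that by simp
      qed
      have CLzx: "CL zx" unfolding zx_def by (rule CL_scaleR[OF CLi])
      define A where "A n x = a n (zx x)" for n x
      have AnA: "in_A (A n)" for n
      proof (rule inA_limit)
        fix e :: real assume e: "e > 0"
        have q0: "0 < 2 ^ n * (M + 1) * (2::real)" using M0 by simp
        have q: "e / (2 ^ n * (M + 1) * 2) > 0" using e q0 by (rule divide_pos_pos)
        have "\<exists>N1. (1/2::real) ^ N1 < e / (2 ^ n * (M + 1) * 2)"
          by (rule real_arch_pow_inv[OF q]) simp
        then obtain N1 where N1: "(1/2::real) ^ N1 < e / (2 ^ n * (M + 1) * 2)" by blast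
        define N where "N = max N1 (Suc n)"
        have nN: "n < N" by (simp add: N_def)
        have pN: "(1/2::real) ^ N \<le> (1/2) ^ N1" by (rule power_decreasing) (auto simp: N_def)
        define Dx where "Dx x = DF n N (\<lambda>u. g (scaleC (of_real (1/2) * u) (zx x)))" for x
        define h where "h x = complex_of_real (2 ^ n) * Dx x" for x
        have each: "in_Au (\<lambda>x. om N ^ (j * (N - n)) * g (scaleC (of_real (1/2) * om N ^ j) (zx x)))" for j
        proof (rule Au_cmult, rule Au_comp0[OF gAu CL_scaleC[OF CLzx]])
          fix x :: 'x assume "x \<in> ball 0 1"
          then have "norm (zx x) < 1" using nzx by simp
          then show "scaleC (of_real (1/2) * om N ^ j) (zx x) \<in> ball 0 1"
            by (simp add: norm_scaleC norm_mult norm_power)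
        qed
        have DxE: "Dx = (\<lambda>x. (\<Sum>j<N. om N ^ (j * (N - n)) * g (scaleC (of_real (1/2) * om N ^ j) (zx x))) / of_nat N)"
          by (rule ext) (simp only: Dx_def DF_def)
        have "in_Au Dx" unfolding DxE by (rule Au_div[OF Au_sum[OF each]])
        then have hAu: "in_Au h" unfolding h_def by (rule Au_cmult)
        then have "in_A h" using hX by blast
        moreover have "\<forall>x\<in>ball 0 1. cmod (A n x - h x) \<le> e"
        proof
          fix x :: 'x assume "x \<in> ball 0 1"
          then have nz: "norm (zx x) < 1" using nzx by simp
          have Ex: "cmod (Dx x - of_real (1/2) ^ n * a n (zx x)) \<le> M * ((1/2) ^ N / (1 - 1/2))"
            unfolding Dx_def by (rule E[OF nz _ _ nN]) auto
          have p2: "complex_of_real (2 ^ n) * complex_of_real (1/2) ^ n = 1" by (rule pow_inv_cancel) simp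
          have ea: "complex_of_real (2 ^ n) * (complex_of_real (1/2) ^ n * a n (zx x)) = a n (zx x)"
            by (simp only: mult.assoc[symmetric] p2 mult_1)
          have "A n x - h x = complex_of_real (2 ^ n) * (complex_of_real (1/2) ^ n * a n (zx x)) - complex_of_real (2 ^ n) * Dx x"
            by (simp only: ea A_def h_def)
          also have "\<dots> = complex_of_real (2 ^ n) * (complex_of_real (1/2) ^ n * a n (zx x) - Dx x)"
            by (rule right_diff_distrib[symmetric])
          finally have "cmod (A n x - h x) = cmod (complex_of_real (2 ^ n)) * cmod (complex_of_real (1/2) ^ n * a n (zx x) - Dx x)"
            by (simp only: norm_mult)
          also have "\<dots> = 2 ^ n * cmod (Dx x - complex_of_real (1/2) ^ n * a n (zx x))"
            by (simp add: norm_minus_commute norm_power)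
          also have "\<dots> \<le> 2 ^ n * (M * ((1/2) ^ N / (1 - 1/2)))"
            by (rule mult_left_mono[OF Ex]) simp
          also have "\<dots> = (1/2) ^ N * (2 ^ n * M * 2)" by (simp add: field_simps)
          also have "\<dots> \<le> (1/2) ^ N1 * (2 ^ n * (M + 1) * 2)"
            using pN M0 by (intro mult_mono) auto
          also have "\<dots> < e"
          proof -
            have pos: "0 < 2 ^ n * (M + 1) * (2::real)" using M0 by simp
            show ?thesis using N1 pos by (simp add: pos_less_divide_eq)
          qed
          finally show "cmod (A n x - h x) \<le> e" by simp
        qed
        ultimately show "\<exists>h. in_A h \<and> (\<forall>x\<in>ball 0 1. cmod (A n x - h x) \<le> e)" by blast
      qed
      show "in_A g" unfolding in_A_def
      proof (intro allI impI)
        fix e :: real assume e: "e > 0"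
        have e3: "e/3 > 0" using e by simp
        obtain d where d: "d > 0" "\<forall>x\<in>ball 0 1. \<forall>x'\<in>ball 0 1. dist x' x < d \<longrightarrow> dist (g x') (g x) < e/3"
          using gAu e3 unfolding in_Au_def uniformly_continuous_on_def by blast
        define r where "r = max (1/2) (1 - d/2)"
        have r: "1/2 \<le> r" "r < 1" "1 - r < d" using d by (auto simp: r_def)
        obtain N0 where N0: "r ^ N0 < (e/3) * (1 - r) / (M + 1)"
          using real_arch_pow_inv[of "(e/3) * (1 - r) / (M + 1)" r] e r M0 by auto
        have tail: "M * (r ^ N0 / (1 - r)) < e/3"
        proof -
          have m1: "M + 1 > 0" using M0 by simp
          have r1: "1 - r > 0" using r by simp
          have a1: "r ^ N0 * (M + 1) < (e/3) * (1 - r)" using N0 by (simp only: pos_less_divide_eq[OF m1])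
          have a2: "(M + 1) * r ^ N0 / (1 - r) < e/3" using a1 r1 by (simp add: pos_divide_less_eq mult.commute)
          have a3: "M * (r ^ N0 / (1 - r)) \<le> (M + 1) * (r ^ N0 / (1 - r))"
            by (rule mult_right_mono) (use r1 r in auto)
          have a4: "(M + 1) * (r ^ N0 / (1 - r)) = (M + 1) * r ^ N0 / (1 - r)" by simp
          show ?thesis using a2 a3 a4 by linarith
        qed
        define \<delta> where "\<delta> n = e / (3 * (of_nat N0 + 1) * (b * c) ^ n)" for n
        have \<delta>: "\<delta> n > 0" for n using e b c by (simp add: \<delta>_def)
        have "\<forall>n. \<exists>p\<in>ftpoly. \<forall>x\<in>ball 0 1. cmod (A n x - p x) < \<delta> n"
          using AnA \<delta> unfolding in_A_def by blast
        then have "\<forall>n. \<exists>p. p \<in> ftpoly \<and> (\<forall>x\<in>ball 0 1. cmod (A n x - p x) < \<delta> n)" by blast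
        from choice[OF this] obtain P where P0: "\<forall>n. P n \<in> ftpoly \<and> (\<forall>x\<in>ball 0 1. cmod (A n x - P n x) < \<delta> n)"
          by blast
        have P: "\<And>n. P n \<in> ftpoly" "\<And>n. \<forall>x\<in>ball 0 1. cmod (A n x - P n x) < \<delta> n" using P0 by auto
        define Lb where "Lb y = scaleR (1/b) (T y)" for y
        have CLLb: "CL Lb" unfolding Lb_def by (rule CL_scaleR[OF CLT])
        define p where "p y = (\<Sum>n<N0. of_real ((r * b * c) ^ n) * P n (0 + Lb y))" for y
        have pF: "p \<in> ftpoly" unfolding p_def[abs_def]
          by (intro ftpoly_sum ftpoly_cmult ftpoly_comp[OF P(1) CLLb])
        have "\<forall>y\<in>ball 0 1. cmod (g y - p y) < e"
        proof
          fix y :: 'y assume y: "y \<in> ball 0 1"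
          then have ny: "norm y < 1" by simp
          have nLb: "norm (Lb y) < 1"
          proof -
            have "norm (Lb y) = norm (T y) / b" using b by (simp add: Lb_def)
            also have "\<dots> \<le> (norm y * b) / b" using b by (intro divide_right_mono b(2)) auto
            also have "\<dots> = norm y" using b by simp
            finally show ?thesis using ny by simp
          qed
          have zLb: "zx (Lb y) = scaleR (1 / (b * c)) y"
          proof -
            have "inv T (Lb y) = scaleR (1/b) (inv T (T y))"
              unfolding Lb_def by (rule linear_scale[OF bounded_linear.linear[OF hTinv]])
            then have "inv T (Lb y) = scaleR (1/b) y" by (simp only: invT1)
            then show ?thesis by (simp add: zx_def)
          qed
          have an: "a n y = of_real ((b * c) ^ n) * A n (Lb y)" for n
          proof -
            have bc: "0 < 1 / (b * c)" "1 / (b * c) \<le> 1" using b c by auto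
            have "A n (Lb y) = of_real (1 / (b * c)) ^ n * a n y"
              unfolding A_def zLb by (rule HOM[OF ny bc])
            then have "of_real ((b * c) ^ n) * A n (Lb y) = (of_real ((b * c) ^ n) * of_real (1 / (b * c)) ^ n) * a n y"
              by (simp only: mult.assoc)
            also have "of_real ((b * c) ^ n) * of_real (1 / (b * c)) ^ n = (1::complex)"
              by (rule pow_inv_cancel) (use b c in simp)
            finally show ?thesis by simp
          qed
          have s1: "cmod (g y - g (scaleC (of_real r) y)) < e/3"
          proof -
            have ry: "scaleR r y \<in> ball 0 1"
            proof -
              have "norm (scaleR r y) = r * norm y" using r by simp
              also have "\<dots> \<le> 1 * norm y" using r by (intro mult_right_mono) auto
              finally show ?thesis using ny by simp
            qed
            have "y - scaleR r y = scaleR (1 - r) y" by (simp add: scaleR_diff_left)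
            then have "dist y (scaleR r y) = \<bar>1 - r\<bar> * norm y" by (simp add: dist_norm)
            also have "\<dots> = (1 - r) * norm y" using r by simp
            also have "\<dots> \<le> (1 - r) * 1" using r ny by (intro mult_left_mono) auto
            also have "\<dots> < d" using r by simp
            finally have "dist (g y) (g (scaleR r y)) < e/3" using d(2) y ry by blast
            then show ?thesis by (simp add: dist_norm scaleR_scaleC)
          qed
          have s2: "cmod (g (scaleC (of_real r) y) - (\<Sum>n<N0. a n y * of_real r ^ n)) < e/3"
          proof -
            have r0: "0 \<le> r" using r by simp
            have "cmod (g (scaleC (of_real r) y) - (\<Sum>n<N0. a n y * of_real r ^ n)) \<le> M * (r ^ N0 / (1 - r))"
              by (rule TAY[OF ny r0 r(2)])
            then show ?thesis using tail by linarith
          qed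
          have s3: "cmod ((\<Sum>n<N0. a n y * of_real r ^ n) - p y) \<le> of_nat N0 * (e / (3 * (of_nat N0 + 1)))"
          proof -
            have tm: "a n y * of_real r ^ n - of_real ((r * b * c) ^ n) * P n (0 + Lb y)
                = of_real ((r * b * c) ^ n) * (A n (Lb y) - P n (Lb y))" for n
            proof -
              have "of_real ((r * b * c) ^ n) = (of_real r ^ n * of_real ((b * c) ^ n) :: complex)"
                by (simp add: power_mult_distrib)
              then show ?thesis by (simp add: an right_diff_distrib)
            qed
            have "(\<Sum>n<N0. a n y * of_real r ^ n) - p y
                = (\<Sum>n<N0. a n y * of_real r ^ n - of_real ((r * b * c) ^ n) * P n (0 + Lb y))"
              by (simp only: p_def sum_subtractf)
            also have "\<dots> = (\<Sum>n<N0. of_real ((r * b * c) ^ n) * (A n (Lb y) - P n (Lb y)))"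
              by (simp only: tm)
            also have "cmod \<dots> \<le> (\<Sum>n<N0. e / (3 * (of_nat N0 + 1)))"
            proof (rule sum_norm_le)
              fix n assume "n \<in> {..<N0}"
              have "cmod (A n (Lb y) - P n (Lb y)) < \<delta> n" using P(2)[of n] nLb by simp
              have rbc: "0 \<le> (r * b * c) ^ n" using r b c by simp
              have canc: "(b * c) ^ n * (e / ((3 * (of_nat N0 + 1)) * (b * c) ^ n)) = e / (3 * (of_nat N0 + 1))"
                by (rule cancel_help) (use b c in simp)
              have "cmod (of_real ((r * b * c) ^ n) * (A n (Lb y) - P n (Lb y))) = (r * b * c) ^ n * cmod (A n (Lb y) - P n (Lb y))"
                using rbc by (simp only: norm_mult norm_of_real abs_of_nonneg)
              also have "\<dots> \<le> (r * b * c) ^ n * \<delta> n"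
                using \<open>cmod (A n (Lb y) - P n (Lb y)) < \<delta> n\<close> rbc by (intro mult_left_mono) auto
              also have "\<dots> = r ^ n * ((b * c) ^ n * (e / ((3 * (of_nat N0 + 1)) * (b * c) ^ n)))"
                by (simp add: \<delta>_def power_mult_distrib)
              also have "\<dots> = r ^ n * (e / (3 * (of_nat N0 + 1)))"
                by (simp only: canc)
              also have "\<dots> \<le> 1 * (e / (3 * (of_nat N0 + 1)))"
                using r e by (intro mult_right_mono power_le_one) auto
              finally show "cmod (of_real ((r * b * c) ^ n) * (A n (Lb y) - P n (Lb y))) \<le> e / (3 * (of_nat N0 + 1))" by simp
            qed
            also have "\<dots> = of_nat N0 * (e / (3 * (of_nat N0 + 1)))" by simp
            finally show ?thesis .
          qed
          have s3': "of_nat N0 * (e / (3 * (of_nat N0 + 1))) \<le> e/3"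
          proof -
            have "of_nat N0 * (e / (3 * (of_nat N0 + 1))) \<le> (of_nat N0 + 1) * (e / (3 * (of_nat N0 + 1)))"
              using e by (intro mult_right_mono) auto
            also have "(of_nat N0 + 1) * (e / (3 * (of_nat N0 + 1))) = e / (3::real)"
              by (rule cancel_help) simp
            finally show ?thesis .
          qed
          have "cmod (g y - p y) \<le> cmod (g y - g (scaleC (of_real r) y))
              + cmod (g (scaleC (of_real r) y) - (\<Sum>n<N0. a n y * of_real r ^ n))
              + cmod ((\<Sum>n<N0. a n y * of_real r ^ n) - p y)" by (rule tri3)
          then show "cmod (g y - p y) < e" using s1 s2 s3 s3' by linarith
        qed
        then show "\<exists>p\<in>ftpoly. \<forall>y\<in>ball 0 1. cmod (g y - p y) < e" using pF by blast
      qed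
    qed
  qed
qed


end
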